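(* Let $T_{\mathfrak{so}_4} \in \mathfrak{so}_4^* \otimes \mathfrak{so}_4^* \otimes \mathfrak{so}_4$ be the structure tensor of the complex Lie algebra $\mathfrak{so}_4$. Then its border rank satisfies $\underline{\mathbf{R}}(T_{\mathfrak{so}_4}) \geq 9$.
   Context: $\mathfrak{so}_n$ denotes the complex Lie algebra of skew-symmetric $n\times n$ complex matrices with bracket $[x,y]=xy-yx$ (note $\mathfrak{so}_4\simeq\mathfrak{sl}_2\times\mathfrak{sl}_2$). For a Lie algebra $\mathfrak{g}$, its structure tensor $T_{\mathfrak{g}}\in\mathfrak{g}^*\otimes\mathfrak{g}^*\otimes\mathfrak{g}$ is the tensor corresponding to the bilinear map $(x,y)\mapsto[x,y]$; in a basis $\{a_i\}$ with dual basis $\{\alpha^i\}$ and $[a_i,a_j]=\sum_k A_{ij}^k a_k$, it is $\sum_{i,j,k}A_{ij}^k\,\alpha^i\otimes\alpha^j\otimes a_k$. For a tensor $T\in A\otimes B\otimes C$ over $\mathbb{C}$, the rank of $T$ is the minimal $r$ with $T=\sum_{i=1}^r a_i\otimes b_i\otimes c_i$, and the border rank $\underline{\mathbf{R}}(T)$ is the minimal $r$ such that $T=\lim_{\epsilon\to 0}T_\epsilon$ with each $T_\epsilon$ of rank at most $r$. *)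

theory Defs
  imports Complex_Main
begin

text \<open>Tensors in C^n (x) C^n (x) C^n are represented by their coordinate arrays
  nat => nat => nat => complex; only indices below n are relevant.\<close>

definition tensor_rank_le :: "nat \<Rightarrow> (nat \<Rightarrow> nat \<Rightarrow> nat \<Rightarrow> complex) \<Rightarrow> nat \<Rightarrow> bool" where
  "tensor_rank_le n T r \<longleftrightarrow>
     (\<exists>a b c :: nat \<Rightarrow> nat \<Rightarrow> complex. \<forall>i<n. \<forall>j<n. \<forall>k<n.
        T i j k = (\<Sum>l<r. a l i * b l j * c l k))"

definition border_rank_le :: "nat \<Rightarrow> (nat \<Rightarrow> nat \<Rightarrow> nat \<Rightarrow> complex) \<Rightarrow> nat \<Rightarrow> bool" where
  "border_rank_le n T r \<longleftrightarrow>
     (\<exists>Te :: real \<Rightarrow> nat \<Rightarrow> nat \<Rightarrow> nat \<Rightarrow> complex.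
        (\<forall>e. tensor_rank_le n (Te e) r) \<and>
        (\<forall>i<n. \<forall>j<n. \<forall>k<n. ((\<lambda>e. Te e i j k) \<longlongrightarrow> T i j k) (at 0)))"

definition border_rank :: "nat \<Rightarrow> (nat \<Rightarrow> nat \<Rightarrow> nat \<Rightarrow> complex) \<Rightarrow> nat" where
  "border_rank n T = (LEAST r. border_rank_le n T r)"

definition mat4_mult :: "(nat \<Rightarrow> nat \<Rightarrow> complex) \<Rightarrow> (nat \<Rightarrow> nat \<Rightarrow> complex) \<Rightarrow> nat \<Rightarrow> nat \<Rightarrow> complex" where
  "mat4_mult M N = (\<lambda>p q. \<Sum>l<4. M p l * N l q)"

definition mat4_bracket :: "(nat \<Rightarrow> nat \<Rightarrow> complex) \<Rightarrow> (nat \<Rightarrow> nat \<Rightarrow> complex) \<Rightarrow> nat \<Rightarrow> nat \<Rightarrow> complex" where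
  "mat4_bracket M N = (\<lambda>p q. mat4_mult M N p q - mat4_mult N M p q)"

definition so4_pair :: "nat \<Rightarrow> nat \<times> nat" where
  "so4_pair k = [(0,1),(0,2),(0,3),(1,2),(1,3),(2,3)] ! k"

definition so4_basis :: "nat \<Rightarrow> nat \<Rightarrow> nat \<Rightarrow> complex" where
  "so4_basis k = (\<lambda>p q. if (p, q) = so4_pair k then 1
                        else if (q, p) = so4_pair k then -1 else 0)"

definition so4_struct_const :: "nat \<Rightarrow> nat \<Rightarrow> nat \<Rightarrow> complex" where
  "so4_struct_const i j = (THE c. (\<forall>k\<ge>6. c k = 0) \<and>
      (\<forall>p<4. \<forall>q<4. mat4_bracket (so4_basis i) (so4_basis j) p q
                     = (\<Sum>k<6. c k * so4_basis k p q)))"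

definition T_so4 :: "nat \<Rightarrow> nat \<Rightarrow> nat \<Rightarrow> complex" where
  "T_so4 i j k = (if i < 6 \<and> j < 6 \<and> k < 6 then so4_struct_const i j k else 0)"

end

theory Submission
  imports Defs "Jordan_Normal_Form.Determinant"
begin

definition Texp :: "nat \<Rightarrow> nat \<Rightarrow> nat \<Rightarrow> complex" where
  "Texp i j k = (if i = 0 \<and> j = 1 \<and> k = 3 then (-1) else if i = 0 \<and> j = 2 \<and> k = 4 then (-1) else if i = 0 \<and> j = 3 \<and> k = 1 then (1) else if i = 0 \<and> j = 4 \<and> k = 2 then (1) else if i = 1 \<and> j = 0 \<and> k = 3 then (1) else if i = 1 \<and> j = 2 \<and> k = 5 then (-1) else if i = 1 \<and> j = 3 \<and> k = 0 then (-1) else if i = 1 \<and> j = 5 \<and> k = 2 then (1) else if i = 2 \<and> j = 0 \<and> k = 4 then (1) else if i = 2 \<and> j = 1 \<and> k = 5 then (1) else if i = 2 \<and> j = 4 \<and> k = 0 then (-1) else if i = 2 \<and> j = 5 \<and> k = 1 then (-1) else if i = 3 \<and> j = 0 \<and> k = 1 then (-1) else if i = 3 \<and> j = 1 \<and> k = 0 then (1) else if i = 3 \<and> j = 4 \<and> k = 5 then (-1) else if i = 3 \<and> j = 5 \<and> k = 4 then (1) else if i = 4 \<and> j = 0 \<and> k = 2 then (-1) else if i = 4 \<and> j = 2 \<and> k = 0 then (1) else if i = 4 \<and> j = 3 \<and> k = 5 then (1) else if i = 4 \<and> j = 5 \<and> k = 3 then (-1) else if i = 5 \<and> j = 1 \<and>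 k = 2 then (-1) else if i = 5 \<and> j = 2 \<and> k = 1 then (1) else if i = 5 \<and> j = 3 \<and> k = 4 then (-1) else if i = 5 \<and> j = 4 \<and> k = 3 then (1) else 0)"

definition Ktab :: "nat \<Rightarrow> nat \<Rightarrow> complex" where
  "Ktab i j = (if i = 0 \<and> j = 2 then (1) else if i = 1 \<and> j = 8 then (-1) else if i = 2 \<and> j = 0 then (-1) else if i = 2 \<and> j = 7 then (1) else if i = 3 \<and> j = 5 then (-1) else if i = 3 \<and> j = 10 then (-1) else if i = 4 \<and> j = 9 then (1) else if i = 5 \<and> j = 3 then (1) else if i = 6 \<and> j = 1 then (1) else if i = 7 \<and> j = 0 then (-1) else if i = 7 \<and> j = 14 then (-1) else if i = 8 \<and> j = 13 then (1) else if i = 9 \<and> j = 16 then (-1) else if i = 10 \<and> j = 5 then (1) else if i = 10 \<and> j = 15 then (1) else if i = 11 \<and> j = 4 then (-1) else if i = 12 \<and> j = 7 then (1) else if i = 12 \<and> j = 14 then (-1) else if i = 13 \<and> j = 6 then (-1) else if i = 14 \<and> j = 12 then (1) else if i = 15 \<and> j = 17 then (1) else if i = 16 \<and> j = 11 then (1) else if i = 17 \<and> j = 10 then (-1) else if i = 17 \<and> j = 15 then (-1) else 0)"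

definition Ntab :: "nat \<Rightarrow> nat \<Rightarrow> complex" where
  "Ntab i j = (if i = 0 \<and> j = 2 then (-1/2) else if i = 0 \<and> j = 7 then (-1/2) else if i = 0 \<and> j = 12 then (1/2) else if i = 1 \<and> j = 6 then (1) else if i = 2 \<and> j = 0 then (1) else if i = 3 \<and> j = 5 then (1) else if i = 4 \<and> j = 11 then (-1) else if i = 5 \<and> j = 3 then (-1/2) else if i = 5 \<and> j = 10 then (1/2) else if i = 5 \<and> j = 17 then (1/2) else if i = 6 \<and> j = 13 then (-1) else if i = 7 \<and> j = 2 then (1/2) else if i = 7 \<and> j = 7 then (-1/2) else if i = 7 \<and> j = 12 then (1/2) else if i = 8 \<and> j = 1 then (-1) else if i = 9 \<and> j = 4 then (1) else if i = 10 \<and> j = 3 then (-1/2) else if i = 10 \<and> j = 10 then (-1/2) else if i = 10 \<and> j = 17 then (-1/2) else if i = 11 \<and> j = 16 then (1) else if i = 12 \<and> j = 14 then (1) else if i = 13 \<and> j = 8 then (1) else if i = 14 \<and> j = 2 then (1/2) else if i = 14 \<and> j = 7 then (-1/2) else if i = 14 \<and> j = 12 then (-1/2) else if i = 15 \<and> j = 3 then (1/2) else if i = 15 \<and> j = 10 then (1/2) else if i = 15 \<and> j = 17 then (-1/2) else if i = 16 \<and> j = 9 then (-1) else if i = 17 \<and> j = 15 then (1) else 0)"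


lemma less6_cases: "(i::nat) < 6 \<longleftrightarrow> i = 0 \<or> i = 1 \<or> i = 2 \<or> i = 3 \<or> i = 4 \<or> i = 5" by auto
lemma less4_cases: "(i::nat) < 4 \<longleftrightarrow> i = 0 \<or> i = 1 \<or> i = 2 \<or> i = 3" by auto

lemma basis_skew: "i < 6 \<Longrightarrow> so4_basis i q p = - so4_basis i p q"
  unfolding so4_basis_def so4_pair_def by (auto simp: less6_cases)

lemma bracket_skew:
  assumes M: "\<And>p q. M q p = - M p q" and N: "\<And>p q. N q p = - N p q"
  shows "mat4_bracket M N q p = - mat4_bracket M N p q"
  unfolding mat4_bracket_def mat4_mult_def
  by (simp add: M[of q] M[of p] N[of q] N[of p] sum_subtractf[symmetric] sum_negf[symmetric] algebra_simps)

lemma pair_simps: "so4_pair 0 = (0,1)" "so4_pair 1 = (0,2)" "so4_pair 2 = (0,3)"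
  "so4_pair 3 = (1,2)" "so4_pair 4 = (1,3)" "so4_pair 5 = (2,3)"
  by (simp_all add: so4_pair_def)

lemma pair_simp1: "so4_pair (Suc 0) = (0,2)" by (simp add: so4_pair_def)

lemma sum6: "(\<Sum>k::nat<6. f k) = f 0 + f 1 + f 2 + f 3 + f 4 + (f 5 :: 'a::comm_monoid_add)"
  by (simp add: eval_nat_numeral lessThan_Suc add.commute add.left_commute)

lemma sum4: "(\<Sum>k::nat<4. f k) = f 0 + f 1 + f 2 + (f 3 :: 'a::comm_monoid_add)"
  by (simp add: eval_nat_numeral lessThan_Suc add.commute add.left_commute)

lemma sum3: "(\<Sum>k::nat<3. f k) = f 0 + f 1 + (f 2 :: 'a::comm_monoid_add)"
  by (simp add: eval_nat_numeral lessThan_Suc add.commute add.left_commute)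

lemma sum2: "(\<Sum>k::nat<2. f k) = f 0 + (f 1 :: 'a::comm_monoid_add)"
  by (simp add: eval_nat_numeral lessThan_Suc add.commute add.left_commute)

lemma skew_expand:
  assumes F: "\<And>p q. p < 4 \<Longrightarrow> q < 4 \<Longrightarrow> F q p = - F p q" and p: "p < 4" and q: "q < 4"
  shows "F p q = (\<Sum>k<6. (if k < 6 then F (fst (so4_pair k)) (snd (so4_pair k)) else 0) * so4_basis k p q)"
proof -
  have d: "F p p = 0" if "p < 4" for p
  proof -
    have "F p p = - F p p" using F[OF that that] .
    then show ?thesis by simp
  qed
  have e: "F 1 0 = - F 0 1" "F 2 0 = - F 0 2" "F 3 0 = - F 0 3" "F 2 1 = - F 1 2" "F 3 1 = - F 1 3" "F 3 2 = - F 2 3"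
    by (rule F; simp)+
  show ?thesis using p q
    unfolding sum6 pair_simps so4_basis_def
    by (simp add: less4_cases) (elim disjE; simp add: d e e[unfolded One_nat_def])
qed

lemma basis_at_pair: "k < 6 \<Longrightarrow> k' < 6 \<Longrightarrow> so4_basis k' (fst (so4_pair k)) (snd (so4_pair k)) = (if k' = k then 1 else 0)"
  unfolding so4_basis_def so4_pair_def by (auto simp: less6_cases)

lemma struct_const_eq:
  assumes i: "i < 6" and j: "j < 6"
  shows "so4_struct_const i j = (\<lambda>k. if k < 6 then mat4_bracket (so4_basis i) (so4_basis j) (fst (so4_pair k)) (snd (so4_pair k)) else 0)"
    (is "_ = ?c")
  unfolding so4_struct_const_def
proof (rule the_equality)
  let ?B = "mat4_bracket (so4_basis i) (so4_basis j)"
  have sk: "\<And>p q. ?B q p = - ?B p q"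
    by (rule bracket_skew) (auto intro: basis_skew i j)
  show "(\<forall>k\<ge>6. ?c k = 0) \<and> (\<forall>p<4. \<forall>q<4. ?B p q = (\<Sum>k<6. ?c k * so4_basis k p q))"
  proof (intro conjI allI impI)
    fix p q :: nat assume "p < 4" "q < 4"
    then show "?B p q = (\<Sum>k<6. ?c k * so4_basis k p q)"
      by (rule skew_expand[of ?B, OF sk])
  qed simp
next
  fix c
  assume h: "(\<forall>k\<ge>6. c k = 0) \<and> (\<forall>p<4. \<forall>q<4. mat4_bracket (so4_basis i) (so4_basis j) p q = (\<Sum>k<6. c k * so4_basis k p q))"
  show "c = ?c"
  proof
    fix k
    show "c k = ?c k"
    proof (cases "k < 6")
      case True
      have lt: "fst (so4_pair k) < 4" "snd (so4_pair k) < 4"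
        using True unfolding so4_pair_def by (auto simp: less6_cases)
      have "mat4_bracket (so4_basis i) (so4_basis j) (fst (so4_pair k)) (snd (so4_pair k))
          = (\<Sum>k'<6. c k' * so4_basis k' (fst (so4_pair k)) (snd (so4_pair k)))"
        using h lt by blast
      also have "\<dots> = (\<Sum>k'<6. c k' * (if k' = k then 1 else 0))"
        by (rule sum.cong[OF refl]) (simp add: basis_at_pair[OF True])
      also have "\<dots> = c k" using True by (simp add: if_distrib cong: if_cong)
      finally show ?thesis using True by simp
    qed (use h[THEN conjunct1] in simp)
  qed
qed

lemma T_so4_eq: assumes i: "3 \<le> i" "i < 6" and j: "j < 6" and k: "k < 6" shows "T_so4 i j k = Texp i j k"
proof -
  have "T_so4 i j k = mat4_bracket (so4_basis i) (so4_basis j) (fst (so4_pair k)) (snd (so4_pair k))"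
    unfolding T_so4_def using i j k by (simp add: struct_const_eq)
  also have "\<dots> = Texp i j k"
  proof -
    have "i = 3 \<or> i = 4 \<or> i = 5" using i by auto
    moreover have "j = 0 \<or> j = 1 \<or> j = 2 \<or> j = 3 \<or> j = 4 \<or> j = 5" using j by auto
    moreover have "k = 0 \<or> k = 1 \<or> k = 2 \<or> k = 3 \<or> k = 4 \<or> k = 5" using k by auto
    ultimately show ?thesis
      by (elim disjE; simp add: Texp_def mat4_bracket_def mat4_mult_def sum4 so4_basis_def pair_simps pair_simp1)
  qed
  finally show ?thesis .
qed


definition wsg :: "nat \<Rightarrow> nat \<Rightarrow> nat \<Rightarrow> complex" where
  "wsg s m m' = (if s = 0 \<and> m = 0 \<and> m' = 1 then 1 else if s = 0 \<and> m = 1 \<and> m' = 0 then -1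
     else if s = 1 \<and> m = 0 \<and> m' = 2 then 1 else if s = 1 \<and> m = 2 \<and> m' = 0 then -1
     else if s = 2 \<and> m = 1 \<and> m' = 2 then 1 else if s = 2 \<and> m = 2 \<and> m' = 1 then -1 else 0)"

definition KF :: "(nat \<Rightarrow> nat \<Rightarrow> nat \<Rightarrow> complex) \<Rightarrow> complex mat" where
  "KF X = mat 18 18 (\<lambda>(R,C). \<Sum>m'<3. wsg (R div 6) (C div 6) m' * X (5 - m') (C mod 6) (R mod 6))"

lemma less18_cases: "(i::nat) < 18 \<longleftrightarrow> i = 0 \<or> i = 1 \<or> i = 2 \<or> i = 3 \<or> i = 4 \<or> i = 5 \<or> i = 6 \<or> i = 7 \<or> i = 8
  \<or> i = 9 \<or> i = 10 \<or> i = 11 \<or> i = 12 \<or> i = 13 \<or> i = 14 \<or> i = 15 \<or> i = 16 \<or> i = 17" by presburger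

lemma sum18: "(\<Sum>k\<in>{0..<18::nat}. f k) = f 0 + f 1 + f 2 + f 3 + f 4 + f 5 + f 6 + f 7 + f 8 + f 9
   + f 10 + f 11 + f 12 + f 13 + f 14 + f 15 + f 16 + (f 17 :: 'a::comm_monoid_add)"
  by (simp add: eval_nat_numeral atLeast0LessThan lessThan_Suc add.commute add.left_commute)

lemma KF_row_0: "C < 18 \<Longrightarrow> (\<Sum>m'<3. wsg (0 div 6) (C div 6) m' * Texp (5 - m') (C mod 6) (0 mod 6)) = Ktab 0 C"
  unfolding less18_cases by (elim disjE; simp add: sum3 wsg_def Texp_def Ktab_def)

lemma NK_row_0: "j < 18 \<Longrightarrow> (\<Sum>l\<in>{0..<18}. Ntab 0 l * Ktab l j) = (if 0 = j then 1 else 0)"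
  unfolding sum18 less18_cases by (simp add: Ntab_def; elim disjE; simp add: Ktab_def)

lemma KF_row_1: "C < 18 \<Longrightarrow> (\<Sum>m'<3. wsg (1 div 6) (C div 6) m' * Texp (5 - m') (C mod 6) (1 mod 6)) = Ktab 1 C"
  unfolding less18_cases by (elim disjE; simp add: sum3 wsg_def Texp_def Ktab_def)

lemma NK_row_1: "j < 18 \<Longrightarrow> (\<Sum>l\<in>{0..<18}. Ntab 1 l * Ktab l j) = (if 1 = j then 1 else 0)"
  unfolding sum18 less18_cases by (simp add: Ntab_def; elim disjE; simp add: Ktab_def)

lemma KF_row_2: "C < 18 \<Longrightarrow> (\<Sum>m'<3. wsg (2 div 6) (C div 6) m' * Texp (5 - m') (C mod 6) (2 mod 6)) = Ktab 2 C"
  unfolding less18_cases by (elim disjE; simp add: sum3 wsg_def Texp_def Ktab_def)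

lemma NK_row_2: "j < 18 \<Longrightarrow> (\<Sum>l\<in>{0..<18}. Ntab 2 l * Ktab l j) = (if 2 = j then 1 else 0)"
  unfolding sum18 less18_cases by (simp add: Ntab_def; elim disjE; simp add: Ktab_def)

lemma KF_row_3: "C < 18 \<Longrightarrow> (\<Sum>m'<3. wsg (3 div 6) (C div 6) m' * Texp (5 - m') (C mod 6) (3 mod 6)) = Ktab 3 C"
  unfolding less18_cases by (elim disjE; simp add: sum3 wsg_def Texp_def Ktab_def)

lemma NK_row_3: "j < 18 \<Longrightarrow> (\<Sum>l\<in>{0..<18}. Ntab 3 l * Ktab l j) = (if 3 = j then 1 else 0)"
  unfolding sum18 less18_cases by (simp add: Ntab_def; elim disjE; simp add: Ktab_def)

lemma KF_row_4: "C < 18 \<Longrightarrow> (\<Sum>m'<3. wsg (4 div 6) (C div 6) m' * Texp (5 - m') (C mod 6) (4 mod 6)) = Ktab 4 C"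
  unfolding less18_cases by (elim disjE; simp add: sum3 wsg_def Texp_def Ktab_def)

lemma NK_row_4: "j < 18 \<Longrightarrow> (\<Sum>l\<in>{0..<18}. Ntab 4 l * Ktab l j) = (if 4 = j then 1 else 0)"
  unfolding sum18 less18_cases by (simp add: Ntab_def; elim disjE; simp add: Ktab_def)

lemma KF_row_5: "C < 18 \<Longrightarrow> (\<Sum>m'<3. wsg (5 div 6) (C div 6) m' * Texp (5 - m') (C mod 6) (5 mod 6)) = Ktab 5 C"
  unfolding less18_cases by (elim disjE; simp add: sum3 wsg_def Texp_def Ktab_def)

lemma NK_row_5: "j < 18 \<Longrightarrow> (\<Sum>l\<in>{0..<18}. Ntab 5 l * Ktab l j) = (if 5 = j then 1 else 0)"
  unfolding sum18 less18_cases by (simp add: Ntab_def; elim disjE; simp add: Ktab_def)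

lemma KF_row_6: "C < 18 \<Longrightarrow> (\<Sum>m'<3. wsg (6 div 6) (C div 6) m' * Texp (5 - m') (C mod 6) (6 mod 6)) = Ktab 6 C"
  unfolding less18_cases by (elim disjE; simp add: sum3 wsg_def Texp_def Ktab_def)

lemma NK_row_6: "j < 18 \<Longrightarrow> (\<Sum>l\<in>{0..<18}. Ntab 6 l * Ktab l j) = (if 6 = j then 1 else 0)"
  unfolding sum18 less18_cases by (simp add: Ntab_def; elim disjE; simp add: Ktab_def)

lemma KF_row_7: "C < 18 \<Longrightarrow> (\<Sum>m'<3. wsg (7 div 6) (C div 6) m' * Texp (5 - m') (C mod 6) (7 mod 6)) = Ktab 7 C"
  unfolding less18_cases by (elim disjE; simp add: sum3 wsg_def Texp_def Ktab_def)

lemma NK_row_7: "j < 18 \<Longrightarrow> (\<Sum>l\<in>{0..<18}. Ntab 7 l * Ktab l j) = (if 7 = j then 1 else 0)"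
  unfolding sum18 less18_cases by (simp add: Ntab_def; elim disjE; simp add: Ktab_def)

lemma KF_row_8: "C < 18 \<Longrightarrow> (\<Sum>m'<3. wsg (8 div 6) (C div 6) m' * Texp (5 - m') (C mod 6) (8 mod 6)) = Ktab 8 C"
  unfolding less18_cases by (elim disjE; simp add: sum3 wsg_def Texp_def Ktab_def)

lemma NK_row_8: "j < 18 \<Longrightarrow> (\<Sum>l\<in>{0..<18}. Ntab 8 l * Ktab l j) = (if 8 = j then 1 else 0)"
  unfolding sum18 less18_cases by (simp add: Ntab_def; elim disjE; simp add: Ktab_def)

lemma KF_row_9: "C < 18 \<Longrightarrow> (\<Sum>m'<3. wsg (9 div 6) (C div 6) m' * Texp (5 - m') (C mod 6) (9 mod 6)) = Ktab 9 C"
  unfolding less18_cases by (elim disjE; simp add: sum3 wsg_def Texp_def Ktab_def)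

lemma NK_row_9: "j < 18 \<Longrightarrow> (\<Sum>l\<in>{0..<18}. Ntab 9 l * Ktab l j) = (if 9 = j then 1 else 0)"
  unfolding sum18 less18_cases by (simp add: Ntab_def; elim disjE; simp add: Ktab_def)

lemma KF_row_10: "C < 18 \<Longrightarrow> (\<Sum>m'<3. wsg (10 div 6) (C div 6) m' * Texp (5 - m') (C mod 6) (10 mod 6)) = Ktab 10 C"
  unfolding less18_cases by (elim disjE; simp add: sum3 wsg_def Texp_def Ktab_def)

lemma NK_row_10: "j < 18 \<Longrightarrow> (\<Sum>l\<in>{0..<18}. Ntab 10 l * Ktab l j) = (if 10 = j then 1 else 0)"
  unfolding sum18 less18_cases by (simp add: Ntab_def; elim disjE; simp add: Ktab_def)

lemma KF_row_11: "C < 18 \<Longrightarrow> (\<Sum>m'<3. wsg (11 div 6) (C div 6) m' * Texp (5 - m') (C mod 6) (11 mod 6)) = Ktab 11 C"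
  unfolding less18_cases by (elim disjE; simp add: sum3 wsg_def Texp_def Ktab_def)

lemma NK_row_11: "j < 18 \<Longrightarrow> (\<Sum>l\<in>{0..<18}. Ntab 11 l * Ktab l j) = (if 11 = j then 1 else 0)"
  unfolding sum18 less18_cases by (simp add: Ntab_def; elim disjE; simp add: Ktab_def)

lemma KF_row_12: "C < 18 \<Longrightarrow> (\<Sum>m'<3. wsg (12 div 6) (C div 6) m' * Texp (5 - m') (C mod 6) (12 mod 6)) = Ktab 12 C"
  unfolding less18_cases by (elim disjE; simp add: sum3 wsg_def Texp_def Ktab_def)

lemma NK_row_12: "j < 18 \<Longrightarrow> (\<Sum>l\<in>{0..<18}. Ntab 12 l * Ktab l j) = (if 12 = j then 1 else 0)"
  unfolding sum18 less18_cases by (simp add: Ntab_def; elim disjE; simp add: Ktab_def)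

lemma KF_row_13: "C < 18 \<Longrightarrow> (\<Sum>m'<3. wsg (13 div 6) (C div 6) m' * Texp (5 - m') (C mod 6) (13 mod 6)) = Ktab 13 C"
  unfolding less18_cases by (elim disjE; simp add: sum3 wsg_def Texp_def Ktab_def)

lemma NK_row_13: "j < 18 \<Longrightarrow> (\<Sum>l\<in>{0..<18}. Ntab 13 l * Ktab l j) = (if 13 = j then 1 else 0)"
  unfolding sum18 less18_cases by (simp add: Ntab_def; elim disjE; simp add: Ktab_def)

lemma KF_row_14: "C < 18 \<Longrightarrow> (\<Sum>m'<3. wsg (14 div 6) (C div 6) m' * Texp (5 - m') (C mod 6) (14 mod 6)) = Ktab 14 C"
  unfolding less18_cases by (elim disjE; simp add: sum3 wsg_def Texp_def Ktab_def)

lemma NK_row_14: "j < 18 \<Longrightarrow> (\<Sum>l\<in>{0..<18}. Ntab 14 l * Ktab l j) = (if 14 = j then 1 else 0)"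
  unfolding sum18 less18_cases by (simp add: Ntab_def; elim disjE; simp add: Ktab_def)

lemma KF_row_15: "C < 18 \<Longrightarrow> (\<Sum>m'<3. wsg (15 div 6) (C div 6) m' * Texp (5 - m') (C mod 6) (15 mod 6)) = Ktab 15 C"
  unfolding less18_cases by (elim disjE; simp add: sum3 wsg_def Texp_def Ktab_def)

lemma NK_row_15: "j < 18 \<Longrightarrow> (\<Sum>l\<in>{0..<18}. Ntab 15 l * Ktab l j) = (if 15 = j then 1 else 0)"
  unfolding sum18 less18_cases by (simp add: Ntab_def; elim disjE; simp add: Ktab_def)

lemma KF_row_16: "C < 18 \<Longrightarrow> (\<Sum>m'<3. wsg (16 div 6) (C div 6) m' * Texp (5 - m') (C mod 6) (16 mod 6)) = Ktab 16 C"
  unfolding less18_cases by (elim disjE; simp add: sum3 wsg_def Texp_def Ktab_def)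

lemma NK_row_16: "j < 18 \<Longrightarrow> (\<Sum>l\<in>{0..<18}. Ntab 16 l * Ktab l j) = (if 16 = j then 1 else 0)"
  unfolding sum18 less18_cases by (simp add: Ntab_def; elim disjE; simp add: Ktab_def)

lemma KF_row_17: "C < 18 \<Longrightarrow> (\<Sum>m'<3. wsg (17 div 6) (C div 6) m' * Texp (5 - m') (C mod 6) (17 mod 6)) = Ktab 17 C"
  unfolding less18_cases by (elim disjE; simp add: sum3 wsg_def Texp_def Ktab_def)

lemma NK_row_17: "j < 18 \<Longrightarrow> (\<Sum>l\<in>{0..<18}. Ntab 17 l * Ktab l j) = (if 17 = j then 1 else 0)"
  unfolding sum18 less18_cases by (simp add: Ntab_def; elim disjE; simp add: Ktab_def)

lemma KF_T: assumes "R < 18" "C < 18" shows "KF T_so4 $$ (R,C) = Ktab R C"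
proof -
  have "KF T_so4 $$ (R,C) = (\<Sum>m'<3. wsg (R div 6) (C div 6) m' * Texp (5 - m') (C mod 6) (R mod 6))"
    using assms unfolding KF_def by (simp add: sum3 T_so4_eq)
  also have "\<dots> = Ktab R C" using assms unfolding less18_cases[of R]
    by (elim disjE; simp only: KF_row_0 KF_row_1 KF_row_2 KF_row_3 KF_row_4 KF_row_5 KF_row_6 KF_row_7 KF_row_8 KF_row_9 KF_row_10 KF_row_11 KF_row_12 KF_row_13 KF_row_14 KF_row_15 KF_row_16 KF_row_17)
  finally show ?thesis .
qed

lemma NK_tab: assumes "i < 18" "j < 18"
  shows "(\<Sum>l\<in>{0..<18}. Ntab i l * Ktab l j) = (if i = j then 1 else 0)"
  using assms unfolding less18_cases[of i]
  by (elim disjE; simp only: NK_row_0 NK_row_1 NK_row_2 NK_row_3 NK_row_4 NK_row_5 NK_row_6 NK_row_7 NK_row_8 NK_row_9 NK_row_10 NK_row_11 NK_row_12 NK_row_13 NK_row_14 NK_row_15 NK_row_16 NK_row_17)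

lemma NK: "mat 18 18 (\<lambda>(i,j). Ntab i j) * KF T_so4 = 1\<^sub>m 18"
proof (rule eq_matI)
  fix i j assume ij: "i < dim_row (1\<^sub>m 18 :: complex mat)" "j < dim_col (1\<^sub>m 18 :: complex mat)"
  then have i: "i < 18" and j: "j < 18" by auto
  have "(mat 18 18 (\<lambda>(i,j). Ntab i j) * KF T_so4) $$ (i,j) = (\<Sum>l\<in>{0..<18}. Ntab i l * Ktab l j)"
    using i j by (simp add: KF_def scalar_prod_def KF_T[symmetric] del: KF_T)
  also have "\<dots> = 1\<^sub>m 18 $$ (i,j)" using NK_tab[OF i j] i j by simp
  finally show "(mat 18 18 (\<lambda>(i,j). Ntab i j) * KF T_so4) $$ (i,j) = 1\<^sub>m 18 $$ (i,j)" .
qed (auto simp: KF_def)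

lemma det_KF_T: "det (KF T_so4) \<noteq> 0"
proof
  assume "det (KF T_so4) = 0"
  moreover have "det (mat 18 18 (\<lambda>(i,j). Ntab i j) * KF T_so4) = det (mat 18 18 (\<lambda>(i,j). Ntab i j)) * det (KF T_so4)"
    by (rule det_mult[of _ 18]) (auto simp: KF_def)
  ultimately show False using NK by simp
qed



definition Wm :: "(nat \<Rightarrow> complex) \<Rightarrow> nat \<Rightarrow> nat \<Rightarrow> complex" where
  "Wm x s m = (\<Sum>m'<3. wsg s m m' * x m')"

lemma Wm_explicit:
  "Wm x 0 0 = x 1" "Wm x 0 1 = - x 0" "Wm x 0 2 = 0"
  "Wm x 1 0 = x 2" "Wm x 1 1 = 0" "Wm x 1 2 = - x 0"
  "Wm x 2 0 = 0" "Wm x 2 1 = x 2" "Wm x 2 2 = - x 1"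
  by (simp_all add: Wm_def sum3 wsg_def)

lemma less3_cases: "(i::nat) < 3 \<longleftrightarrow> i = 0 \<or> i = 1 \<or> i = 2" by auto
lemma less2_cases: "(i::nat) < 2 \<longleftrightarrow> i = 0 \<or> i = 1" by auto

lemma W_rank2: "\<exists>PQ :: (nat \<Rightarrow> nat \<Rightarrow> complex) \<times> (nat \<Rightarrow> nat \<Rightarrow> complex).
   \<forall>s<3. \<forall>m<3. Wm x s m = (\<Sum>t::nat<2. fst PQ s t * snd PQ t m)"
proof (cases "x 0 \<noteq> 0")
  case True
  let ?P = "\<lambda>s t. if t = 0 then Wm x s 1 else Wm x s 2"
  let ?Q = "\<lambda>t m. if t = 0 then (if m = 1 then 1 else if m = 0 then - x 1 / x 0 else 0)
      else (if m = 2 then 1 else if m = 0 then - x 2 / x 0 else 0)"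
  show ?thesis
  proof (intro exI[of _ "(?P, ?Q)"] allI impI)
    fix s m :: nat assume "s < 3" "m < 3"
    then show "Wm x s m = (\<Sum>t::nat<2. fst (?P, ?Q) s t * snd (?P, ?Q) t m)"
      unfolding less3_cases using True
      by (elim disjE; simp add: sum2 Wm_explicit Wm_explicit[unfolded One_nat_def] field_simps)
  qed
next
  case F0: False
  show ?thesis
  proof (cases "x 1 \<noteq> 0")
    case True
    let ?P = "\<lambda>s t. if t = 0 then Wm x s 0 else Wm x s 2"
    let ?Q = "\<lambda>t m. if t = 0 then (if m = 0 then 1 else if m = 1 then - x 0 / x 1 else 0)
      else (if m = 2 then 1 else if m = 1 then - x 2 / x 1 else 0)"
    show ?thesis
    proof (intro exI[of _ "(?P, ?Q)"] allI impI)
      fix s m :: nat assume "s < 3" "m < 3"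
      then show "Wm x s m = (\<Sum>t::nat<2. fst (?P, ?Q) s t * snd (?P, ?Q) t m)"
        unfolding less3_cases using True F0
        by (elim disjE; simp add: sum2 Wm_explicit Wm_explicit[unfolded One_nat_def] field_simps)
    qed
  next
    case F1: False
    show ?thesis
    proof (cases "x 2 \<noteq> 0")
      case True
      let ?P = "\<lambda>s t. if t = 0 then Wm x s 0 else Wm x s 1"
      let ?Q = "\<lambda>t m. if t = 0 then (if m = 0 then 1 else if m = 2 then - x 0 / x 2 else 0)
      else (if m = 1 then 1 else if m = 2 then - x 1 / x 2 else 0)"
      show ?thesis
      proof (intro exI[of _ "(?P, ?Q)"] allI impI)
        fix s m :: nat assume "s < 3" "m < 3"
        then show "Wm x s m = (\<Sum>t::nat<2. fst (?P, ?Q) s t * snd (?P, ?Q) t m)"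
          unfolding less3_cases using True F0 F1
          by (elim disjE; simp add: sum2 Wm_explicit Wm_explicit[unfolded One_nat_def] field_simps)
      qed
    next
      case False
      show ?thesis
      proof (intro exI[of _ "(\<lambda>s t. 0, \<lambda>t m. 0)"] allI impI)
        fix s m :: nat assume "s < 3" "m < 3"
        then show "Wm x s m = (\<Sum>t::nat<2. fst ((\<lambda>s t. 0, \<lambda>t m. 0) :: (nat \<Rightarrow> nat \<Rightarrow> complex) \<times> (nat \<Rightarrow> nat \<Rightarrow> complex)) s t * snd ((\<lambda>s t. 0, \<lambda>t m. 0) :: (nat \<Rightarrow> nat \<Rightarrow> complex) \<times> (nat \<Rightarrow> nat \<Rightarrow> complex)) t m)"
          unfolding less3_cases using False F0 F1
          by (elim disjE; simp add: Wm_explicit Wm_explicit[unfolded One_nat_def])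
      qed
    qed
  qed
qed

lemma sum18_16: "{0..<18::nat} = insert 17 (insert 16 {0..<16})" by auto

lemma sum16_split: "(\<Sum>n\<in>{0..<16::nat}. f n) = (\<Sum>l<8. f l + f (l + 8))"
proof -
  have "(\<Sum>n\<in>{0..<16::nat}. f n) = (\<Sum>n\<in>{0..<8::nat}. f n) + (\<Sum>n\<in>{8..<16::nat}. f n)"
    by (rule sum.atLeastLessThan_concat[symmetric]) auto
  also have "(\<Sum>n\<in>{8..<16::nat}. f n) = (\<Sum>n\<in>{0..<8::nat}. f (n + 8))"
    using sum.shift_bounds_nat_ivl[of f 0 8 8] by simp
  finally show ?thesis by (simp add: sum.distrib atLeast0LessThan)
qed

lemma det_KF_rank8:
  fixes a b c :: "nat \<Rightarrow> nat \<Rightarrow> complex"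
  assumes X: "\<forall>i<6. \<forall>j<6. \<forall>k<6. X i j k = (\<Sum>l<8. a l i * b l j * c l k)"
  shows "det (KF X) = 0"
proof -
  have "\<forall>l. \<exists>PQ :: (nat \<Rightarrow> nat \<Rightarrow> complex) \<times> (nat \<Rightarrow> nat \<Rightarrow> complex).
     \<forall>s<3. \<forall>m<3. Wm (\<lambda>m'. a l (5 - m')) s m = (\<Sum>t::nat<2. fst PQ s t * snd PQ t m)"
    using W_rank2 by blast
  then obtain PQ where PQ: "\<And>l s m. s < 3 \<Longrightarrow> m < 3 \<Longrightarrow>
     Wm (\<lambda>m'. a l (5 - m')) s m = (\<Sum>t::nat<2. fst (PQ l) s t * snd (PQ l) t m)"
    by metis
  define U where "U = mat 18 18 (\<lambda>(R,n). if n < 16 then fst (PQ (n mod 8)) (R div 6) (n div 8) * c (n mod 8) (R mod 6) else 0)"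
  define V where "V = mat 18 18 (\<lambda>(n,C). if n < 16 then snd (PQ (n mod 8)) (n div 8) (C div 6) * b (n mod 8) (C mod 6) else 0)"
  have UV: "KF X = U * V"
  proof (rule eq_matI)
    fix R C assume "R < dim_row (U * V)" "C < dim_col (U * V)"
    then have R: "R < 18" and C: "C < 18" by (auto simp: U_def V_def)
    have s: "R div 6 < 3" and m: "C div 6 < 3" using R C by auto
    have "(U * V) $$ (R,C) = (\<Sum>n\<in>{0..<18}. U $$ (R,n) * V $$ (n,C))"
      using R C by (simp add: U_def V_def scalar_prod_def)
    also have "\<dots> = (\<Sum>n\<in>{0..<16}. U $$ (R,n) * V $$ (n,C))"
    proof -
      have e: "{0..<18::nat} = insert 17 (insert 16 {0..<16})" by auto
      have "U $$ (R,16) = 0" "U $$ (R,17) = 0" using R by (simp_all add: U_def)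
      then show ?thesis unfolding e by simp
    qed
    also have "\<dots> = (\<Sum>l<8. \<Sum>t<2. fst (PQ l) (R div 6) t * snd (PQ l) t (C div 6) * (b l (C mod 6) * c l (R mod 6)))"
      unfolding sum16_split using R C by (simp add: U_def V_def sum2 algebra_simps)
    also have "\<dots> = (\<Sum>l<8. Wm (\<lambda>m'. a l (5 - m')) (R div 6) (C div 6) * (b l (C mod 6) * c l (R mod 6)))"
      by (simp add: PQ[OF s m] sum_distrib_right)
    also have "\<dots> = (\<Sum>m'<3. wsg (R div 6) (C div 6) m' * (\<Sum>l<8. a l (5 - m') * b l (C mod 6) * c l (R mod 6)))"
      unfolding Wm_def by (simp add: sum_distrib_left sum_distrib_right sum.swap[of _ "{..<8}"] algebra_simps)
    also have "\<dots> = KF X $$ (R,C)"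
      using R C X by (simp add: KF_def)
    finally show "KF X $$ (R,C) = (U * V) $$ (R,C)" by simp
  qed (auto simp: KF_def U_def V_def)
  have "det U = 0"
  proof -
    have "U *\<^sub>v unit_vec 18 17 = 0\<^sub>v 18"
    proof (rule eq_vecI)
      fix i assume "i < dim_vec (0\<^sub>v 18 :: complex vec)"
      then have i: "i < 18" by simp
      show "(U *\<^sub>v unit_vec 18 17) $ i = 0\<^sub>v 18 $ i"
        using i by (simp add: U_def scalar_prod_def sum18)
    qed (simp add: U_def)
    then show ?thesis
      by (subst det_0_iff_vec_prod_zero_field[of _ 18]) (auto simp: U_def intro!: exI[of _ "unit_vec 18 17"])
  qed
  moreover have "det (U * V) = det U * det V"
    by (rule det_mult[of _ 18]) (auto simp: U_def V_def)
  ultimately show ?thesis using UV by simp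
qed


lemma det_tendsto:
  fixes A :: "real \<Rightarrow> complex mat"
  assumes A: "\<And>e. A e \<in> carrier_mat n n" and B: "B \<in> carrier_mat n n"
    and lim: "\<And>i j. i < n \<Longrightarrow> j < n \<Longrightarrow> ((\<lambda>e. A e $$ (i,j)) \<longlongrightarrow> B $$ (i,j)) (at 0)"
  shows "((\<lambda>e. det (A e)) \<longlongrightarrow> det B) (at 0)"
proof -
  have rA: "dim_row (A e) = n" "dim_col (A e) = n" for e using A[of e] by auto
  have rB: "dim_row B = n" "dim_col B = n" using B by auto
  have dA: "det (A e) = (\<Sum>p\<in>{p. p permutes {0..<n}}. signof p * (\<Prod>i = 0..<n. A e $$ (i, p i)))" for e
    unfolding det_def rA by simp
  have dB: "det B = (\<Sum>p\<in>{p. p permutes {0..<n}}. signof p * (\<Prod>i = 0..<n. B $$ (i, p i)))"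
    unfolding det_def rB by simp
  have "((\<lambda>e. \<Sum>p\<in>{p. p permutes {0..<n}}. signof p * (\<Prod>i = 0..<n. A e $$ (i, p i)))
      \<longlongrightarrow> (\<Sum>p\<in>{p. p permutes {0..<n}}. signof p * (\<Prod>i = 0..<n. B $$ (i, p i)))) (at 0)"
  proof (rule tendsto_sum)
    fix p assume p: "p \<in> {p. p permutes {0..<n}}"
    show "((\<lambda>e. signof p * (\<Prod>i = 0..<n. A e $$ (i, p i))) \<longlongrightarrow> signof p * (\<Prod>i = 0..<n. B $$ (i, p i))) (at 0)"
    proof (rule tendsto_mult[OF tendsto_const], rule tendsto_prod)
      fix i assume i: "i \<in> {0..<n}"
      then have "p i < n" using p permutes_in_image[of p "{0..<n}" i] by auto
      then show "((\<lambda>e. A e $$ (i, p i)) \<longlongrightarrow> B $$ (i, p i)) (at 0)" using lim i by auto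
    qed
  qed
  then show ?thesis unfolding dA dB .
qed

lemma KF_tendsto:
  fixes Te :: "real \<Rightarrow> nat \<Rightarrow> nat \<Rightarrow> nat \<Rightarrow> complex"
  assumes "\<And>i j k. i < 6 \<Longrightarrow> j < 6 \<Longrightarrow> k < 6 \<Longrightarrow> ((\<lambda>e. Te e i j k) \<longlongrightarrow> T i j k) (at 0)"
  shows "((\<lambda>e. det (KF (Te e))) \<longlongrightarrow> det (KF T)) (at 0)"
proof (rule det_tendsto[of _ 18])
  fix R C :: nat assume RC: "R < 18" "C < 18"
  have e: "\<And>X. KF X $$ (R,C) = (\<Sum>m'<3. wsg (R div 6) (C div 6) m' * X (5 - m') (C mod 6) (R mod 6))"
    using RC by (simp add: KF_def)
  show "((\<lambda>e. KF (Te e) $$ (R,C)) \<longlongrightarrow> KF T $$ (R,C)) (at 0)"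
    unfolding e
  proof (rule tendsto_sum, rule tendsto_mult[OF tendsto_const], rule assms)
    fix m' :: nat show "5 - m' < 6" by simp
  qed simp_all
qed (auto simp: KF_def)

lemma rank_pad:
  assumes "tensor_rank_le 6 X r" "r \<le> 8"
  shows "\<exists>a b c :: nat \<Rightarrow> nat \<Rightarrow> complex. \<forall>i<6. \<forall>j<6. \<forall>k<6. X i j k = (\<Sum>l<8. a l i * b l j * c l k)"
proof -
  obtain a b c :: "nat \<Rightarrow> nat \<Rightarrow> complex" where abc: "\<forall>i<6. \<forall>j<6. \<forall>k<6. X i j k = (\<Sum>l<r. a l i * b l j * c l k)"
    using assms(1) unfolding tensor_rank_le_def by blast
  define a' where "a' = (\<lambda>l i. if l < r then a l i else 0)"
  have "\<forall>i<6. \<forall>j<6. \<forall>k<6. X i j k = (\<Sum>l<8. a' l i * b l j * c l k)"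
  proof (intro allI impI)
    fix i j k :: nat assume "i < 6" "j < 6" "k < 6"
    have "(\<Sum>l<8. a' l i * b l j * c l k) = (\<Sum>l<r. a' l i * b l j * c l k)"
      by (rule sum.mono_neutral_right) (use assms(2) in \<open>auto simp: a'_def\<close>)
    also have "\<dots> = (\<Sum>l<r. a l i * b l j * c l k)" by (simp add: a'_def)
    finally show "X i j k = (\<Sum>l<8. a' l i * b l j * c l k)" using abc \<open>i<6\<close> \<open>j<6\<close> \<open>k<6\<close> by simp
  qed
  then show ?thesis by blast
qed

lemma border_rank_ge9: assumes "border_rank_le 6 T_so4 r" shows "r \<ge> 9"
proof (rule ccontr)
  assume "\<not> r \<ge> 9"
  then have r: "r \<le> 8" by simp
  from assms[unfolded border_rank_le_def] obtain Te :: "real \<Rightarrow> nat \<Rightarrow> nat \<Rightarrow> nat \<Rightarrow> complex" where TeP: "(\<forall>e. tensor_rank_le 6 (Te e) r) \<and>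
        (\<forall>i<6. \<forall>j<6. \<forall>k<6. ((\<lambda>e. Te e i j k) \<longlongrightarrow> T_so4 i j k) (at 0))"
    ..
  have rk0: "\<forall>e. tensor_rank_le 6 (Te e) r" using TeP by (rule conjunct1)
  have lim: "\<forall>i<6. \<forall>j<6. \<forall>k<6. ((\<lambda>e. Te e i j k) \<longlongrightarrow> T_so4 i j k) (at 0)" using TeP by (rule conjunct2)
  have rk: "\<And>e. tensor_rank_le 6 (Te e) r" using rk0 by (rule spec)
  have z: "\<And>e. det (KF (Te e)) = 0"
  proof -
    fix e
    obtain a b c :: "nat \<Rightarrow> nat \<Rightarrow> complex" where "\<forall>i<6. \<forall>j<6. \<forall>k<6. Te e i j k = (\<Sum>l<8. a l i * b l j * c l k)"
      using rank_pad[OF rk r] by blast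
    then show "det (KF (Te e)) = 0" by (rule det_KF_rank8)
  qed
  have "((\<lambda>e. det (KF (Te e))) \<longlongrightarrow> det (KF T_so4)) (at 0)"
  proof (rule KF_tendsto)
    fix i j k :: nat assume "i < 6" "j < 6" "k < 6"
    then show "((\<lambda>e. Te e i j k) \<longlongrightarrow> T_so4 i j k) (at 0)" using lim by simp
  qed
  then have "((\<lambda>e::real. 0) \<longlongrightarrow> det (KF T_so4)) (at 0)" by (simp add: z)
  then have "det (KF T_so4) = 0" by (rule LIM_unique[OF _ tendsto_const])
  then show False using det_KF_T by simp
qed

lemma border_rank_ex: "border_rank_le 6 T_so4 36"
proof -
  have "tensor_rank_le 6 T_so4 36"
    unfolding tensor_rank_le_def
  proof (intro exI allI impI)
    fix i j k :: nat assume i: "i < 6" and j: "j < 6" and k: "k < 6"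
    have "(\<Sum>l<36. (if i = l div 6 then 1 else 0) * (if j = l mod 6 then 1 else 0) * T_so4 (l div 6) (l mod 6) k)
        = (\<Sum>l<36. if l = 6 * i + j then T_so4 i j k else 0)"
    proof (rule sum.cong[OF refl])
      fix l assume "l \<in> {..<36::nat}"
      have "(i = l div 6 \<and> j = l mod 6) \<longleftrightarrow> l = 6 * i + j"
      proof
        assume "i = l div 6 \<and> j = l mod 6"
        then show "l = 6 * i + j" by simp
      next
        assume "l = 6 * i + j"
        then show "i = l div 6 \<and> j = l mod 6" using j by simp
      qed
      then show "(if i = l div 6 then 1 else 0) * (if j = l mod 6 then 1 else 0) * T_so4 (l div 6) (l mod 6) k
          = (if l = 6 * i + j then T_so4 i j k else 0)" by auto
    qed
    also have "\<dots> = T_so4 i j k" using i j by (simp add: sum.delta')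
    finally show "T_so4 i j k = (\<Sum>l<36. (if i = l div 6 then 1 else 0) * (if j = l mod 6 then 1 else 0) * T_so4 (l div 6) (l mod 6) k)"
      by (rule sym)
  qed
  then show ?thesis unfolding border_rank_le_def
    by (intro exI[of _ "\<lambda>e. T_so4"]) auto
qed

theorem theorem4:
  shows "border_rank 6 T_so4 \<ge> 9"
proof -
  have "border_rank_le 6 T_so4 (LEAST r. border_rank_le 6 T_so4 r)"
    by (rule LeastI_ex) (use border_rank_ex in blast)
  then show ?thesis unfolding border_rank_def by (rule border_rank_ge9)
qed

end
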